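(* Let $\psi\in\mathcal K$ have radius of convergence $R_\psi>0$ and Khinchin family $(Y_t)$, and for $t\in(0,R_\psi)$ let $q(t)$ be the extinction probability of the Galton–Watson process with offspring distribution $Y_t$. If $\lim_{t\uparrow R_\psi}\psi(t)/t=+\infty$, then $$q(t)\sim\frac{\psi(0)}{\psi(t)}\qquad\text{as }t\uparrow R_\psi.$$
   Context: $\mathcal K$ is the class of non-constant power series $f(z)=\sum_{n\ge0}a_nz^n$ with positive radius of convergence $R$, non-negative coefficients and $a_0>0$; its Khinchin family is given by $\mathbf P(X_t=n)=a_nt^n/f(t)$ for $n\ge0$, $t\in(0,R)$. The extinction probability is the probability that the Galton–Watson tree is finite. $a(t)\sim b(t)$ means $a(t)/b(t)\to1$. *)

theory Defs
  imports "HOL-Analysis.Analysis" "HOL-Library.Landau_Symbols"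
begin

definition in_K :: "(nat \<Rightarrow> real) \<Rightarrow> bool" where
  "in_K a \<longleftrightarrow> (\<forall>n. a n \<ge> 0) \<and> a 0 > 0 \<and> (\<exists>n>0. a n \<noteq> 0) \<and> conv_radius a > 0"

definition pseries :: "(nat \<Rightarrow> real) \<Rightarrow> real \<Rightarrow> real" where
  "pseries a t = (\<Sum>n. a n * t ^ n)"

definition khinchin_pmf :: "(nat \<Rightarrow> real) \<Rightarrow> real \<Rightarrow> nat \<Rightarrow> real" where
  "khinchin_pmf a t n = a n * t ^ n / pseries a t"

definition offspring_pgf :: "(nat \<Rightarrow> real) \<Rightarrow> real \<Rightarrow> real \<Rightarrow> real" where
  "offspring_pgf a t s = (\<Sum>n. khinchin_pmf a t n * s ^ n)"

text \<open>Extinction probability of the Galton-Watson process with offspring X_t: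
  P(tree finite) = lim_k P(Z_k = 0) = lim_k g^k(0), with g the offspring pgf.\<close>
definition extinction_prob :: "(nat \<Rightarrow> real) \<Rightarrow> real \<Rightarrow> real" where
  "extinction_prob a t = lim (\<lambda>k. (offspring_pgf a t ^^ k) 0)"

definition at_left_ereal :: "ereal \<Rightarrow> real filter" where
  "at_left_ereal R = (if R = \<infinity> then at_top else at_left (real_of_ereal R))"

end

theory Submission
  imports Defs
begin

lemma ps_summable:
  assumes "0 \<le> x" "ereal x < conv_radius a"
  shows "summable (\<lambda>n. a n * x ^ n)"
  using summable_in_conv_radius[of x a] assms by simp

lemma ps_mono:
  assumes "\<forall>n. a n \<ge> 0" "0 \<le> x" "x \<le> y" "ereal y < conv_radius a"
  shows "pseries a x \<le> pseries a y"
proof -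
  have "ereal x < conv_radius a" using assms by (meson ereal_less_eq(3) le_less_trans)
  then show ?thesis unfolding pseries_def
    using assms ps_summable[of x a] ps_summable[of y a]
    by (intro suminf_le) (auto intro!: mult_left_mono power_mono)
qed

lemma ps_pos:
  assumes "in_K a" "0 \<le> x" "ereal x < conv_radius a"
  shows "pseries a x \<ge> a 0" "pseries a 0 = a 0"
proof -
  show "pseries a 0 = a 0" unfolding pseries_def by simp
  then show "pseries a x \<ge> a 0" using ps_mono[of a 0 x] assms unfolding in_K_def by auto
qed

lemma pgf_eq:
  assumes "in_K a" "0 < t" "ereal t < conv_radius a" "0 \<le> s" "s \<le> 1"
  shows "offspring_pgf a t s = pseries a (t * s) / pseries a t"
proof -
  have "t * s \<le> t" using assms by (simp add: mult_left_le)
  then have "ereal (t * s) < conv_radius a" using assms by (meson ereal_less_eq(3) le_less_trans)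
  then have sm: "summable (\<lambda>n. a n * (t * s) ^ n)" using ps_summable assms by simp
  have "offspring_pgf a t s = (\<Sum>n. a n * (t * s) ^ n / pseries a t)"
    unfolding offspring_pgf_def khinchin_pmf_def by (simp add: power_mult_distrib mult.assoc)
  also have "\<dots> = pseries a (t * s) / pseries a t"
    using suminf_divide[OF sm] unfolding pseries_def by simp
  finally show ?thesis .
qed

lemma main_bound:
  assumes K: "in_K a" and e: "0 < e" "e < t" and tR: "ereal t < conv_radius a"
    and rat: "pseries a e / e \<le> pseries a t / t"
  shows "pseries a 0 / pseries a t \<le> extinction_prob a t \<and> extinction_prob a t \<le> pseries a e / pseries a t"
proof -
  define g where "g = offspring_pgf a t"
  define q where "q = (\<lambda>k. (g ^^ k) 0)"
  have t0: "0 < t" using e by simp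
  have eR: "ereal e < conv_radius a" using e tR by (meson ereal_less_eq(3) le_less_trans less_imp_le)
  have a0: "a 0 > 0" and an: "\<forall>n. a n \<ge> 0" using K unfolding in_K_def by auto
  have Pt: "pseries a t \<ge> a 0" using ps_pos[OF K _ tR] t0 by simp
  have Pe: "pseries a e \<ge> a 0" using ps_pos[OF K _ eR] e by simp
  have P0: "pseries a 0 = a 0" using ps_pos[OF K _ tR] t0 by simp
  have Ptpos: "pseries a t > 0" using Pt a0 by linarith
  have qS: "q (Suc k) = pseries a (t * q k) / pseries a t" if "0 \<le> q k" "q k \<le> 1" for k
    using pgf_eq[OF K t0 tR that] by (simp add: q_def g_def)
  have et: "pseries a e / pseries a t \<le> e / t"
    using rat Ptpos t0 e by (simp add: field_simps)
  have bnd: "0 \<le> q k \<and> q k \<le> e / t" for k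
  proof (induction k)
    case 0 then show ?case using e by (simp add: q_def)
  next
    case (Suc k)
    have "e / t \<le> 1" using e by simp
    then have le1: "q k \<le> 1" using Suc by linarith
    have tq: "t * q k \<le> e" using Suc t0 by (simp add: field_simps)
    have tq0: "0 \<le> t * q k" using Suc t0 by simp
    have "pseries a (t * q k) \<le> pseries a e" using ps_mono[OF an tq0 tq eR] .
    moreover have "pseries a (t * q k) \<ge> a 0"
      using ps_pos[OF K tq0] tq eR by (meson ereal_less_eq(3) le_less_trans)
    ultimately have "a 0 / pseries a t \<le> q (Suc k) \<and> q (Suc k) \<le> pseries a e / pseries a t"
      using qS[of k] Suc le1 Ptpos by (simp add: divide_right_mono)
    moreover have "0 \<le> a 0 / pseries a t" using a0 Ptpos by simp
    ultimately show ?case using et by linarith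
  qed
  have et1: "e / t \<le> 1" using e by simp
  have le1: "q k \<le> 1" for k using bnd[of k] et1 by linarith
  have inc: "q k \<le> q (Suc k)" for k
  proof (induction k)
    case 0
    then show ?case using bnd[of 1] by (simp add: q_def)
  next
    case (Suc k)
    have "t * q k \<le> t * q (Suc k)" using Suc t0 by simp
    moreover have "ereal (t * q (Suc k)) < conv_radius a"
    proof -
      have "t * q (Suc k) \<le> t" using le1[of "Suc k"] bnd[of "Suc k"] t0 by (simp add: mult_left_le)
      then show ?thesis using tR by (meson ereal_less_eq(3) le_less_trans)
    qed
    ultimately have "pseries a (t * q k) \<le> pseries a (t * q (Suc k))"
      using ps_mono[OF an] bnd[of k] t0 by simp
    then have X: "pseries a (t * q k) / pseries a t \<le> pseries a (t * q (Suc k)) / pseries a t"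
      using Ptpos by (simp add: divide_right_mono)
    have e1: "q (Suc k) = pseries a (t * q k) / pseries a t" using qS[of k] bnd[of k] le1[of k] by blast
    have e2: "q (Suc (Suc k)) = pseries a (t * q (Suc k)) / pseries a t"
      using qS[of "Suc k"] bnd[of "Suc k"] le1[of "Suc k"] by blast
    show ?case using X e1 e2 by linarith
  qed
  have "Bseq q" using bnd le1 by (intro BseqI'[of _ 1]) auto
  moreover have "monoseq q" using inc by (simp add: monoseq_Suc)
  ultimately have "convergent q" by (rule Bseq_monoseq_convergent)
  then have lim: "q \<longlonglongrightarrow> extinction_prob a t"
    unfolding extinction_prob_def q_def g_def by (simp add: convergent_LIMSEQ_iff)
  have up: "q (Suc k) \<le> pseries a e / pseries a t" for k
  proof -
    have tq: "t * q k \<le> e" using bnd[of k] t0 by (simp add: field_simps)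
    have "pseries a (t * q k) \<le> pseries a e" using ps_mono[OF an _ tq eR] bnd[of k] t0 by simp
    then show ?thesis using qS[of k] bnd[of k] le1[of k] Ptpos by (simp add: divide_right_mono)
  qed
  have q1: "q 1 = pseries a 0 / pseries a t" using qS[of 0] by (simp add: q_def)
  have low: "q 1 \<le> q n" if "n \<ge> 1" for n
    using that inc by (meson incseq_SucI incseq_def)
  have "pseries a 0 / pseries a t \<le> extinction_prob a t"
    using LIMSEQ_le_const[OF lim, of "pseries a 0 / pseries a t"] low q1 by metis
  moreover have "extinction_prob a t \<le> pseries a e / pseries a t"
    using LIMSEQ_le_const2[OF lim, of "pseries a e / pseries a t"] up
    by (metis Suc_le_D)
  ultimately show ?thesis by simp
qed

lemma filter_ev:
  assumes "0 < c" "ereal c < R"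
  shows "eventually (\<lambda>t. c < t \<and> ereal t < R) (at_left_ereal R)"
proof (cases "R = \<infinity>")
  case True
  then show ?thesis unfolding at_left_ereal_def using eventually_gt_at_top[of c] by simp
next
  case False
  then obtain r where r: "R = ereal r" using assms by (cases R) auto
  then have "c < r" using assms by simp
  then show ?thesis unfolding at_left_ereal_def using False r eventually_at_left_real[of c r]
    by (auto elim!: eventually_mono)
qed

theorem proposition6p6:
  fixes a :: "nat \<Rightarrow> real"
  assumes "in_K a"
    and "filterlim (\<lambda>t. pseries a t / t) at_top (at_left_ereal (conv_radius a))"
  shows "(\<lambda>t. extinction_prob a t) \<sim>[at_left_ereal (conv_radius a)] (\<lambda>t. pseries a 0 / pseries a t)"
proof -
  let ?F = "at_left_ereal (conv_radius a)"
  have K: "\<forall>n. a n \<ge> 0" "a 0 > 0" "conv_radius a > 0" using assms(1) unfolding in_K_def by auto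
  obtain c :: real where c: "0 < c" "ereal c < conv_radius a"
  proof (cases "conv_radius a")
    case (real r) then show ?thesis using K that[of "r/2"] by auto
  next
    case PInf then show ?thesis using that[of 1] by auto
  next
    case MInf then show ?thesis using K by auto
  qed
  have P0: "pseries a 0 = a 0" unfolding pseries_def by simp
  have "isCont (\<lambda>x. \<Sum>n. a n * x^n) 0"
    by (rule isCont_powser[of _ c]) (use ps_summable[of c a] c in auto)
  then have cont: "(pseries a \<longlongrightarrow> a 0) (at_right 0)"
  proof -
    have "(pseries a \<longlongrightarrow> pseries a 0) (at 0)"
      using \<open>isCont _ 0\<close> unfolding isCont_def pseries_def[abs_def] .
    then have "(pseries a \<longlongrightarrow> pseries a 0) (at_right 0)"
      using filterlim_at_split by blast
    then show ?thesis using P0 by simp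
  qed
  have key: "\<forall>\<^sub>F t in ?F. 1 \<le> extinction_prob a t / (pseries a 0 / pseries a t)
        \<and> extinction_prob a t / (pseries a 0 / pseries a t) \<le> pseries a e / pseries a 0"
    if e: "0 < e" "e < c" for e
  proof -
    have ev1: "\<forall>\<^sub>F t in ?F. pseries a e / e \<le> pseries a t / t"
      using assms(2) unfolding filterlim_at_top by blast
    have ev2: "\<forall>\<^sub>F t in ?F. c < t \<and> ereal t < conv_radius a" using filter_ev[OF c] .
    show ?thesis using ev1 ev2
    proof eventually_elim
      case (elim t)
      have Pt: "pseries a t \<ge> a 0" using ps_pos[OF assms(1), of t] elim c by simp
      have Ptp: "pseries a t > 0" using Pt K by linarith
      have b: "pseries a 0 / pseries a t \<le> extinction_prob a t \<and> extinction_prob a t \<le> pseries a e / pseries a t"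
        using main_bound[OF assms(1) e(1) _ _ ] elim e by auto
      have "1 \<le> extinction_prob a t * pseries a t / pseries a 0"
        using b Ptp K P0 by (simp add: field_simps)
      moreover have "extinction_prob a t * pseries a t / pseries a 0 \<le> pseries a e / pseries a 0"
        using b Ptp K P0 by (simp add: field_simps)
      ultimately show ?case by simp
    qed
  qed
  have "((\<lambda>t. extinction_prob a t / (pseries a 0 / pseries a t)) \<longlongrightarrow> 1) ?F"
  proof (rule order_tendstoI)
    fix y :: real assume y: "y < 1"
    show "\<forall>\<^sub>F t in ?F. y < extinction_prob a t / (pseries a 0 / pseries a t)"
      using key[of "c/2"] c y by (auto elim!: eventually_mono)
  next
    fix y :: real assume y: "1 < y"
    have "a 0 < y * a 0" using y K by simp
    then have "\<forall>\<^sub>F x in at_right 0. pseries a x < y * a 0"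
      using cont order_tendstoD(2) by blast
    then obtain d :: real where d: "d > 0" "\<And>x. 0 < x \<Longrightarrow> x < d \<Longrightarrow> pseries a x < y * a 0"
      unfolding eventually_at_right_field by auto
    define e where "e = min (d/2) (c/2)"
    have e: "0 < e" "e < c" "e < d" using d c by (auto simp: e_def)
    have "pseries a e / pseries a 0 < y" using d(2)[OF e(1) e(3)] P0 K by (simp add: field_simps)
    then show "\<forall>\<^sub>F t in ?F. extinction_prob a t / (pseries a 0 / pseries a t) < y"
      using key[OF e(1,2)] by (auto elim!: eventually_mono)
  qed
  then show ?thesis by (rule asymp_equivI')
qed

end
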